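(* Let $\Sigma$ be a finite alphabet with $m=|\Sigma|$, and let $M=(Q,\Sigma,\delta,\vec q_0,F)$ be the deterministic finite automaton defined as follows. Fix a symbol $a_0\notin\Sigma$. The state set is $Q=P\times N\times C$ where $P=\Sigma\cup\{a_0\}$ (component $p$, the last input letter), $N=(\Sigma\cup\{\epsilon\})^{m+1}$ (component $\vec n=(n_d)_{d\in\Sigma\cup\{a_0\}}$, recording for each $d$ the letter most recently read right after $d$), and $C=\{\mathtt{WHITE},\mathtt{BLACK}\}^m$ (component $\vec c=(c_d)_{d\in\Sigma}$). The initial state is $\vec q_0=(a_0,\epsilon^{m+1},\mathtt{WHITE}^m)$ and the final states are $F=\{(p,\vec n,\vec c)\in Q:\vec c\neq\mathtt{BLACK}^m\}$. The transition $\delta((p,\vec n,\vec c),a)$ for $a\in\Sigma$ is computed by the following procedure: (1) if $n_p\neq\epsilon$ and $n_p\neq a$, then set $b\gets p$ and repeat \{$c_b\gets\mathtt{BLACK}$; $b\gets n_b$\} until $b=p$; (2) then, if $c_a=\mathtt{BLACK}$, set $\vec c\gets\mathtt{BLACK}^m$; (3) set $n_p\gets a$; (4) set $p\gets a$; the resulting $(p,\vec n,\vec c)$ is the new state. Then the language accepted by $M$ equals $L$, the language of unique Eulerian trails over $\Sigma$.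
   Context: For a word $t=t_1\cdots t_n$ over $\Sigma$ (viewed as a vertex set), $G(t)$ is the directed multigraph on $\Sigma$ with one edge $t_i\to t_{i+1}$ for each $1\le i<n$; a word $s=s_1\cdots s_k$ is an Eulerian trail of $G(t)$ if the multiset of pairs $\{(s_i,s_{i+1}):1\le i<k\}$ equals the multiset $\{(t_i,t_{i+1}):1\le i<n\}$ (trails are vertex sequences). The language $L\subseteq\Sigma^*$ consists of the empty word $\epsilon$ together with all nonempty words $t$ such that $t$ is the only Eulerian trail of $G(t)$ starting at the vertex $t_1$ (no word $s\neq t$ with $s_1=t_1$ is an Eulerian trail of $G(t)$). *)

theory Defs
  imports Main "HOL-Library.Multiset" "HOL-Library.While_Combinator"
begin

(* Alphabet Sigma = UNIV of a finite type 'a (so m = CARD('a) \<ge> 1).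
   P = Sigma \<union> {a0} is encoded as 'a option, with None = a0.
   Entries of N are in Sigma \<union> {\<epsilon>}, encoded as 'a option, with None = \<epsilon>.
   C = {WHITE,BLACK}^m is encoded as 'a \<Rightarrow> color. *)

datatype color = White | Black

type_synonym 'a dstate = "'a option \<times> ('a option \<Rightarrow> 'a option) \<times> ('a \<Rightarrow> color)"

(* Edge multiset of the graph G(t): one edge t_i -> t_{i+1} per consecutive pair *)
definition edges :: "'a list \<Rightarrow> ('a \<times> 'a) multiset" where
  "edges t = mset (zip t (tl t))"

definition Leul :: "'a list set" where
  "Leul = {t. t = [] \<or>
     (\<forall>s. s \<noteq> [] \<and> hd s = hd t \<and> edges s = edges t \<longrightarrow> s = t)}"

(* Loop variable b : 'a option option; Some x is the element x of P,
   None marks that the procedure got stuck (b became \<epsilon>, or c_{a0} was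
   requested), which is treated as non-termination. *)
definition loop_body ::
  "('a option \<Rightarrow> 'a option) \<Rightarrow> 'a option option \<times> ('a \<Rightarrow> color)
     \<Rightarrow> 'a option option \<times> ('a \<Rightarrow> color)" where
  "loop_body n = (\<lambda>(bo, c). case bo of
      Some (Some d) \<Rightarrow> (map_option Some (n (Some d)), c(d := Black))
    | _ \<Rightarrow> (None, c))"

(* transition function; None = the procedure does not terminate *)
definition delta :: "'a dstate \<Rightarrow> 'a \<Rightarrow> 'a dstate option" where
  "delta q a = (case q of (p, n, c) \<Rightarrow>
     let c1o = (if n p \<noteq> None \<and> n p \<noteq> Some a
                then map_option snd
                       (while_option (\<lambda>(b, _). b \<noteq> Some p) (loop_body n)
                          (loop_body n (Some p, c)))
                else Some c)
     in map_option (\<lambda>c1. let c2 = (if c1 a = Black then (\<lambda>_. Black) else c1)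
                          in (Some a, n(p := Some a), c2)) c1o)"

definition q0 :: "'a dstate" where
  "q0 = (None, (\<lambda>_. None), (\<lambda>_. White))"

definition final :: "'a dstate \<Rightarrow> bool" where
  "final q = (snd (snd q) \<noteq> (\<lambda>_. Black))"

fun run_from :: "'a dstate \<Rightarrow> 'a list \<Rightarrow> 'a dstate option" where
  "run_from q [] = Some q"
| "run_from q (a # w) = Option.bind (delta q a) (\<lambda>q'. run_from q' w)"

definition accepts :: "'a list \<Rightarrow> bool" where
  "accepts w = (\<exists>q. run_from q0 w = Some q \<and> final q)"

end

theory Submission
  imports Defs
begin


definition pn :: "'a list \<Rightarrow> 'a option \<times> ('a option \<Rightarrow> 'a option)" where
  "pn t = fold (\<lambda>a (p, n). (Some a, n(p := Some a))) t (None, (\<lambda>_. None))"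

lemma pn_Nil: "pn [] = (None, (\<lambda>_. None))" by (simp add: pn_def)

lemma pn_snoc: "pn (t @ [a]) = (Some a, (snd (pn t))(fst (pn t) := Some a))"
  by (simp add: pn_def split: prod.splits)

lemma fst_pn: "fst (pn t) = (if t = [] then None else Some (last t))"
  by (induction t rule: rev_induct) (auto simp: pn_Nil pn_snoc)

lemma nL1: "snd (pn t) (Some d) = None \<Longrightarrow> Suc i < length t \<Longrightarrow> t ! i \<noteq> d"
proof (induction t arbitrary: i rule: rev_induct)
  case Nil then show ?case by simp
next
  case (snoc a t)
  show ?case
  proof (cases "t \<noteq> [] \<and> last t = d")
    case True then show ?thesis using snoc.prems by (simp add: pn_snoc fst_pn)
  next
    case False
    then have e: "snd (pn t) (Some d) = None" using snoc.prems by (auto simp: pn_snoc fst_pn split: if_splits)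
    show ?thesis
    proof (cases "Suc i < length t")
      case True then show ?thesis using snoc.IH[OF e] by (simp add: nth_append)
    next
      case False
      then have "i = length t - 1" "t \<noteq> []" using snoc.prems by auto
      then show ?thesis using \<open>\<not> (t \<noteq> [] \<and> last t = d)\<close> by (simp add: nth_append last_conv_nth)
    qed
  qed
qed

lemma nL2: "snd (pn t) (Some d) = Some x \<Longrightarrow> \<exists>i. Suc i < length t \<and> t ! i = d \<and> t ! Suc i = x \<and>
   (\<forall>j. i < j \<longrightarrow> Suc j < length t \<longrightarrow> t ! j \<noteq> d)"
proof (induction t rule: rev_induct)
  case Nil then show ?case by (simp add: pn_Nil)
next
  case (snoc a t)
  show ?case
  proof (cases "t \<noteq> [] \<and> last t = d")
    case True
    then have "x = a" using snoc.prems by (simp add: pn_snoc fst_pn)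
    then show ?thesis using True
      by (intro exI[of _ "length t - 1"]) (auto simp: nth_append last_conv_nth)
  next
    case False
    then have e: "snd (pn t) (Some d) = Some x" using snoc.prems by (auto simp: pn_snoc fst_pn split: if_splits)
    obtain i where i: "Suc i < length t" "t ! i = d" "t ! Suc i = x"
      "\<forall>j. i < j \<longrightarrow> Suc j < length t \<longrightarrow> t ! j \<noteq> d" using snoc.IH[OF e] by blast
    show ?thesis
    proof (intro exI[of _ i] conjI allI impI)
      fix j assume "i < j" "Suc j < length (t @ [a])"
      then show "(t @ [a]) ! j \<noteq> d" using i False
      proof (cases "Suc j < length t")
        case False
        then have "j = length t - 1" using \<open>Suc j < length (t @ [a])\<close> by simp
        moreover have "t \<noteq> []" using i by auto
        ultimately show ?thesis using i \<open>\<not> (t \<noteq> [] \<and> last t = d)\<close> \<open>i < j\<close>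
          by (auto simp: nth_append last_conv_nth)
      qed (auto simp: nth_append)
    qed (use i in \<open>auto simp: nth_append\<close>)
  qed
qed

definition SW :: "'a list \<Rightarrow> bool" where
  "SW t \<longleftrightarrow> (\<exists>i j l k. i < j \<and> Suc j < length t \<and> t!i = t!j \<and> t!Suc i \<noteq> t!Suc j \<and>
      i \<le> l \<and> l \<le> j \<and> j < k \<and> k < length t \<and> t!k = t!l)"

definition Bs :: "'a list \<Rightarrow> 'a set" where
  "Bs t = {d. \<exists>i j l. i < j \<and> Suc j < length t \<and> t!i = t!j \<and> t!Suc i \<noteq> t!Suc j \<and>
      i \<le> l \<and> l \<le> j \<and> t!l = d}"

definition col :: "'a list \<Rightarrow> 'a \<Rightarrow> color" where
  "col t = (if SW t then (\<lambda>_. Black) else (\<lambda>d. if d \<in> Bs t then Black else White))"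

lemma SW_mono: "SW t \<Longrightarrow> SW (t @ [a])"
proof -
  assume "SW t"
  then obtain i j l k where w: "i < j" "Suc j < length t" "t!i = t!j" "t!Suc i \<noteq> t!Suc j"
      "i \<le> l" "l \<le> j" "j < k" "k < length t" "t!k = t!l" unfolding SW_def by blast
  then show ?thesis unfolding SW_def
    by (intro exI[of _ i] exI[of _ j] exI[of _ l] exI[of _ k]) (auto simp: nth_append)
qed

lemma Bs_mono: "d \<in> Bs t \<Longrightarrow> d \<in> Bs (t @ [a])"
proof -
  assume "d \<in> Bs t"
  then obtain i j l where w: "i < j" "Suc j < length t" "t!i = t!j" "t!Suc i \<noteq> t!Suc j"
      "i \<le> l" "l \<le> j" "t!l = d" unfolding Bs_def by blast
  then show ?thesis unfolding Bs_def
    by (intro CollectI exI[of _ i] exI[of _ j] exI[of _ l]) (auto simp: nth_append)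
qed




lemma SW_snoc_cases:
  assumes "SW (t @ [a])" "t \<noteq> []"
  shows "SW t \<or> a \<in> Bs t \<or> (\<exists>i l. Suc i < length t \<and> t!i = last t \<and> t!Suc i \<noteq> a \<and> i \<le> l \<and> l < length t \<and> t!l = a)"
proof -
  let ?u = "t @ [a]"
  obtain i j l k where w: "i < j" "Suc j < length ?u" "?u!i = ?u!j" "?u!Suc i \<noteq> ?u!Suc j"
      "i \<le> l" "l \<le> j" "j < k" "k < length ?u" "?u!k = ?u!l" using assms(1) unfolding SW_def by blast
  have li: "?u ! i = t ! i" "?u ! Suc i = t ! Suc i" "?u ! j = t ! j" "?u ! l = t ! l"
    using w by (auto simp: nth_append)
  show ?thesis
  proof (cases "Suc j < length t")
    case True
    have lj: "?u ! Suc j = t ! Suc j" using True by (simp add: nth_append)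
    show ?thesis
    proof (cases "k < length t")
      case True
      then have "?u ! k = t ! k" by (simp add: nth_append)
      then have "SW t" unfolding SW_def using w li lj True \<open>Suc j < length t\<close>
        by (intro exI[of _ i] exI[of _ j] exI[of _ l] exI[of _ k]) auto
      then show ?thesis by simp
    next
      case False
      then have "k = length t" using w by simp
      then have "?u ! k = a" by simp
      then have "a \<in> Bs t" unfolding Bs_def using w li lj \<open>Suc j < length t\<close>
        by (intro CollectI exI[of _ i] exI[of _ j] exI[of _ l]) auto
      then show ?thesis by simp
    qed
  next
    case False
    then have j: "j = length t - 1" using w by simp
    then have k: "k = length t" using w by simp
    have "?u ! Suc j = a" using j assms(2) by (simp add: nth_append)
    moreover have "t ! j = last t" using j assms(2) by (simp add: last_conv_nth)
    ultimately show ?thesis using w li k j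
      by (intro disjI2 exI[of _ i] exI[of _ l]) auto
  qed
qed

lemma Bs_snoc_cases:
  assumes "d \<in> Bs (t @ [a])" "t \<noteq> []"
  shows "d \<in> Bs t \<or> (\<exists>i l. Suc i < length t \<and> t!i = last t \<and> t!Suc i \<noteq> a \<and> i \<le> l \<and> l < length t \<and> t!l = d)"
proof -
  let ?u = "t @ [a]"
  obtain i j l where w: "i < j" "Suc j < length ?u" "?u!i = ?u!j" "?u!Suc i \<noteq> ?u!Suc j"
      "i \<le> l" "l \<le> j" "?u!l = d" using assms(1) unfolding Bs_def by blast
  have li: "?u ! i = t ! i" "?u ! Suc i = t ! Suc i" "?u ! j = t ! j" "?u ! l = t ! l"
    using w by (auto simp: nth_append)
  show ?thesis
  proof (cases "Suc j < length t")
    case True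
    have lj: "?u ! Suc j = t ! Suc j" using True by (simp add: nth_append)
    have "d \<in> Bs t" unfolding Bs_def using w li lj True
      by (intro CollectI exI[of _ i] exI[of _ j] exI[of _ l]) auto
    then show ?thesis by simp
  next
    case False
    then have j: "j = length t - 1" using w by simp
    have "?u ! Suc j = a" using j assms(2) by (simp add: nth_append)
    moreover have "t ! j = last t" using j assms(2) by (simp add: last_conv_nth)
    ultimately show ?thesis using w li j
      by (intro disjI2 exI[of _ i] exI[of _ l]) auto
  qed
qed

lemma SW_snoc_intro1: "a \<in> Bs t \<Longrightarrow> SW (t @ [a])"
proof -
  assume "a \<in> Bs t"
  then obtain i j l where w: "i < j" "Suc j < length t" "t!i = t!j" "t!Suc i \<noteq> t!Suc j"
      "i \<le> l" "l \<le> j" "t!l = a" unfolding Bs_def by blast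
  then show ?thesis unfolding SW_def
    by (intro exI[of _ i] exI[of _ j] exI[of _ l] exI[of _ "length t"]) (auto simp: nth_append)
qed

lemma Bs_snoc_intro:
  assumes "Suc i < length t" "t!i = last t" "t!Suc i \<noteq> a" "i \<le> l" "l < length t"
  shows "t ! l \<in> Bs (t @ [a])"
proof -
  have ne: "t \<noteq> []" using assms by auto
  have "t ! (length t - 1) = last t" using ne by (simp add: last_conv_nth)
  then show ?thesis unfolding Bs_def using assms
    by (intro CollectI exI[of _ i] exI[of _ "length t - 1"] exI[of _ l]) (auto simp: nth_append)
qed

lemma SW_snoc_intro2:
  assumes "Suc i < length t" "t!i = last t" "t!Suc i \<noteq> a" "i \<le> l" "l < length t" "t ! l = a"
  shows "SW (t @ [a])"
proof -
  have ne: "t \<noteq> []" using assms by auto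
  have "t ! (length t - 1) = last t" using ne by (simp add: last_conv_nth)
  then show ?thesis unfolding SW_def using assms
    by (intro exI[of _ i] exI[of _ "length t - 1"] exI[of _ l] exI[of _ "length t"]) (auto simp: nth_append)
qed

lemma last_notin_Bs: "\<not> SW t \<Longrightarrow> t \<noteq> [] \<Longrightarrow> last t \<notin> Bs t"
proof
  assume "\<not> SW t" "t \<noteq> []" "last t \<in> Bs t"
  then obtain i j l where w: "i < j" "Suc j < length t" "t!i = t!j" "t!Suc i \<noteq> t!Suc j"
      "i \<le> l" "l \<le> j" "t!l = last t" unfolding Bs_def by blast
  have "t ! (length t - 1) = last t" using \<open>t \<noteq> []\<close> by (simp add: last_conv_nth)
  then have "SW t" unfolding SW_def using w
    by (intro exI[of _ i] exI[of _ j] exI[of _ l] exI[of _ "length t - 1"]) auto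
  then show False using \<open>\<not> SW t\<close> by simp
qed

lemma same_exit:
  assumes "\<not> SW t" "Suc i < length t" "t!i = last t" "Suc i' < length t" "t!i' = last t" "i < i'"
  shows "t ! Suc i = t ! Suc i'"
proof (rule ccontr)
  assume "t ! Suc i \<noteq> t ! Suc i'"
  have ne: "t \<noteq> []" using assms by auto
  have "t ! (length t - 1) = last t" using ne by (simp add: last_conv_nth)
  then have "SW t" unfolding SW_def using assms \<open>t ! Suc i \<noteq> t ! Suc i'\<close>
    by (intro exI[of _ i] exI[of _ i'] exI[of _ i] exI[of _ "length t - 1"]) auto
  then show False using assms by simp
qed



lemma edges_Nil[simp]: "edges [] = {#}" by (simp add: edges_def)
lemma edges_single[simp]: "edges [x] = {#}" by (simp add: edges_def)
lemma edges_Cons2[simp]: "edges (x # y # r) = add_mset (x, y) (edges (y # r))" by (simp add: edges_def)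

lemma edges_split: "edges (xs @ y # ys) = edges (xs @ [y]) + edges (y # ys)"
proof (induction xs)
  case Nil then show ?case by simp
next
  case (Cons x xs)
  then show ?case by (cases xs) auto
qed

lemma glue:
  assumes "xs \<noteq> []" "ys \<noteq> []" "last xs = hd ys"
  shows "edges (xs @ tl ys) = edges xs + edges ys" "last (xs @ tl ys) = last ys"
    "hd (xs @ tl ys) = hd xs" "xs @ tl ys \<noteq> []"
proof -
  obtain y ys' where ys: "ys = y # ys'" using assms by (cases ys) auto
  obtain xs0 where xs: "xs = xs0 @ [y]" using assms ys by (metis append_butlast_last_id list.sel(1))
  show "edges (xs @ tl ys) = edges xs + edges ys" using ys xs edges_split[of xs0 y ys'] by simp
  show "last (xs @ tl ys) = last ys" using ys xs by (cases ys') auto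
  show "hd (xs @ tl ys) = hd xs" using assms by simp
  show "xs @ tl ys \<noteq> []" using assms by simp
qed

definition seg :: "'a list \<Rightarrow> nat \<Rightarrow> nat \<Rightarrow> 'a list" where
  "seg t a b = take (Suc b - a) (drop a t)"

lemma seg_props:
  assumes "a \<le> b" "b < length t"
  shows "seg t a b \<noteq> []" "hd (seg t a b) = t ! a" "last (seg t a b) = t ! b"
    "length (seg t a b) = Suc b - a" "\<And>m. m \<le> b - a \<Longrightarrow> seg t a b ! m = t ! (a + m)"
proof -
  show "seg t a b \<noteq> []" using assms by (simp add: seg_def)
  show "length (seg t a b) = Suc b - a" using assms by (simp add: seg_def)
  show nth: "\<And>m. m \<le> b - a \<Longrightarrow> seg t a b ! m = t ! (a + m)" using assms by (simp add: seg_def)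
  show "hd (seg t a b) = t ! a" using assms nth[of 0] by (simp add: seg_def hd_conv_nth)
  show "last (seg t a b) = t ! b" using assms nth[of "b - a"] by (simp add: seg_def last_conv_nth)
qed

lemma seg_glue:
  assumes "a \<le> b" "b \<le> c" "c < length t"
  shows "seg t a b @ tl (seg t b c) = seg t a c"
proof -
  have "tl (seg t b c) = take (c - b) (drop (Suc b - a) (drop a t))"
    using assms by (simp add: seg_def drop_Suc tl_take tl_drop add.commute)
  then have "seg t a b @ tl (seg t b c) = take (Suc b - a + (c - b)) (drop a t)"
    by (simp add: seg_def take_add)
  also have "Suc b - a + (c - b) = Suc c - a" using assms by simp
  finally show ?thesis by (simp add: seg_def)
qed

lemma seg_all: "t \<noteq> [] \<Longrightarrow> seg t 0 (length t - 1) = t"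
  by (simp add: seg_def)

lemma SW_not_Leul:
  assumes "SW t"
  shows "t \<notin> Leul"
proof -
  obtain i j l k where w: "i < j" "Suc j < length t" "t!i = t!j" "t!Suc i \<noteq> t!Suc j"
      "i \<le> l" "l \<le> j" "j < k" "k < length t" "t!k = t!l" using assms unfolding SW_def by blast
  define N where "N = length t - 1"
  have ne: "t \<noteq> []" using w by auto
  have kN: "k \<le> N" using w N_def by simp
  define A where "A = seg t 0 i"
  define B where "B = seg t j k"
  define C where "C = seg t l j"
  define D where "D = seg t i l"
  define E where "E = seg t k N"
  note pA = seg_props[of 0 i t, folded A_def]
  note pB = seg_props[of j k t, folded B_def]
  note pC = seg_props[of l j t, folded C_def]
  note pD = seg_props[of i l t, folded D_def]
  note pE = seg_props[of k N t, folded E_def]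
  have lt: "0 \<le> i" "j \<le> k" "k < length t" "l \<le> j" "j < length t" "i \<le> l" "l < length t"
    "k \<le> N" "N < length t" "i < length t" using w N_def by auto
  define s where "s = A @ tl B @ tl C @ tl D @ tl E"
  have g1: "edges (A @ tl B) = edges A + edges B" "last (A @ tl B) = t ! k" "A @ tl B \<noteq> []"
     "hd (A @ tl B) = t ! 0"
    using glue[of A B] pA pB lt w by auto
  have g2: "edges ((A @ tl B) @ tl C) = edges A + edges B + edges C" "last ((A @ tl B) @ tl C) = t ! j"
     "(A @ tl B) @ tl C \<noteq> []" "hd ((A @ tl B) @ tl C) = t ! 0"
    using glue[of "A @ tl B" C] g1 pC lt w by auto
  have g3: "edges (((A @ tl B) @ tl C) @ tl D) = edges A + edges B + edges C + edges D"
     "last (((A @ tl B) @ tl C) @ tl D) = t ! l"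
     "((A @ tl B) @ tl C) @ tl D \<noteq> []" "hd (((A @ tl B) @ tl C) @ tl D) = t ! 0"
    using glue[of "(A @ tl B) @ tl C" D] g2 pD lt w by auto
  have g4: "edges ((((A @ tl B) @ tl C) @ tl D) @ tl E) = edges A + edges B + edges C + edges D + edges E"
     "hd ((((A @ tl B) @ tl C) @ tl D) @ tl E) = t ! 0"
     "(((A @ tl B) @ tl C) @ tl D) @ tl E \<noteq> []"
    using glue[of "((A @ tl B) @ tl C) @ tl D" E] g3 pE lt w by auto
  have es: "edges s = edges A + edges B + edges C + edges D + edges E" "hd s = t ! 0" "s \<noteq> []"
    using g4 unfolding s_def by simp_all
  have h1: "seg t 0 l = A @ tl D" using seg_glue[of 0 i l t] lt A_def D_def by simp
  have h2: "seg t 0 j = seg t 0 l @ tl C" using seg_glue[of 0 l j t] lt C_def by simp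
  have h3: "seg t 0 k = seg t 0 j @ tl B" using seg_glue[of 0 j k t] lt B_def by simp
  have h4: "t = seg t 0 k @ tl E" using seg_glue[of 0 k N t] lt E_def seg_all[OF ne] N_def by simp
  have e1: "edges (seg t 0 l) = edges A + edges D" using h1 glue[of A D] pA pD lt by auto
  have e2: "edges (seg t 0 j) = edges A + edges D + edges C"
    using h2 glue[of "seg t 0 l" C] e1 seg_props[of 0 l t] pC lt by auto
  have e3: "edges (seg t 0 k) = edges A + edges D + edges C + edges B"
    using h3 glue[of "seg t 0 j" B] e2 seg_props[of 0 j t] pB lt by auto
  have "edges (seg t 0 k @ tl E) = edges (seg t 0 k) + edges E"
    using glue[of "seg t 0 k" E] seg_props[of 0 k t] pE lt by auto
  then have e4: "edges t = edges A + edges D + edges C + edges B + edges E"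
    using h4 e3 by metis
  have eq: "edges s = edges t" using es e4 by (simp add: ac_simps)
  have hd: "hd s = hd t" using es ne by (simp add: hd_conv_nth)
  have lA: "length A = Suc i" using pA lt by simp
  have "tl B \<noteq> []" using pB lt w by (cases B) auto
  then obtain b bs where bb: "tl B = b # bs" by (cases "tl B") auto
  have "s ! Suc i = tl B ! 0" unfolding s_def using lA bb
    by (metis append_Cons nth_Cons_0 nth_append_length)
  also have "tl B ! 0 = B ! 1" using \<open>tl B \<noteq> []\<close> by (cases B) auto
  also have "B ! 1 = t ! Suc j" using pB(5)[of 1] lt w by simp
  finally have "s \<noteq> t" using w by auto
  then show ?thesis using es eq hd ne unfolding Leul_def by auto
qed



lemma size_edges: "size (edges t) = length t - 1"
  by (simp add: edges_def)

lemma decomp: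
  "length s = length t \<Longrightarrow> s \<noteq> t \<Longrightarrow> s \<noteq> [] \<Longrightarrow> hd s = hd t \<Longrightarrow>
   \<exists>X v y ys z zs. s = X @ v # y # ys \<and> t = X @ v # z # zs \<and> y \<noteq> z"
proof (induction s arbitrary: t)
  case Nil then show ?case by simp
next
  case (Cons a s1)
  obtain t1 where t: "t = a # t1" using Cons.prems by (cases t) auto
  have ne: "s1 \<noteq> t1" "length s1 = length t1" using Cons.prems t by auto
  then have "s1 \<noteq> []" by auto
  then obtain y ys where s1: "s1 = y # ys" by (cases s1) auto
  then obtain z zs where t1: "t1 = z # zs" using ne by (cases t1) auto
  show ?case
  proof (cases "y = z")
    case False
    then show ?thesis using s1 t1 t by (intro exI[of _ "[]"]) auto
  next
    case True
    then obtain X v y' ys' z' zs' where "s1 = X @ v # y' # ys'" "t1 = X @ v # z' # zs'" "y' \<noteq> z'"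
      using Cons.IH[of t1] ne s1 t1 by auto
    then show ?thesis using t by (intro exI[of _ "a # X"]) auto
  qed
qed

lemma SW_shift: "SW t \<Longrightarrow> SW (X @ t)"
proof -
  assume "SW t"
  then obtain i j l k where w: "i < j" "Suc j < length t" "t!i = t!j" "t!Suc i \<noteq> t!Suc j"
      "i \<le> l" "l \<le> j" "j < k" "k < length t" "t!k = t!l" unfolding SW_def by blast
  have nn: "\<And>m. (X @ t) ! (length X + m) = t ! m" by (simp add: nth_append)
  show ?thesis unfolding SW_def
    apply (rule exI[of _ "length X + i"], rule exI[of _ "length X + j"], rule exI[of _ "length X + l"],
        rule exI[of _ "length X + k"])
    using w nn[of i] nn[of j] nn[of l] nn[of k] nn[of "Suc i"] nn[of "Suc j"] by auto
qed

lemma noenter: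
  "\<forall>(a,b)\<in>set (zip u (tl u)). b \<in> C \<longrightarrow> a \<in> C \<Longrightarrow> u \<noteq> [] \<Longrightarrow> hd u \<notin> C \<Longrightarrow> \<forall>e\<in>set u. e \<notin> C"
proof (induction u)
  case Nil then show ?case by simp
next
  case (Cons x u)
  note P = Cons.prems and IH = Cons.IH
  show ?case
  proof (cases u)
    case Nil then show ?thesis using P by simp
  next
    case (Cons y u')
    have z: "set (zip (x # u) (tl (x # u))) = insert (x, y) (set (zip u (tl u)))"
      using Cons by simp
    have A: "y \<notin> C" using P(1,3) unfolding z by auto
    have B: "\<forall>(a,b)\<in>set (zip u (tl u)). b \<in> C \<longrightarrow> a \<in> C" using P(1) unfolding z by blast
    have "\<forall>e\<in>set u. e \<notin> C" by (rule IH[OF B]) (simp_all add: \<open>u = y # u'\<close> A)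
    then show ?thesis using P(3) by simp
  qed
qed

lemma core:
  assumes eq: "edges (v # y # ys) = edges (v # z # zs)" and yz: "y \<noteq> z"
  shows "SW (v # z # zs)"
proof (rule ccontr)
  assume nsw: "\<not> SW (v # z # zs)"
  define t where "t = v # z # zs"
  define s where "s = v # y # ys"
  have "(v, y) \<in># edges (v # y # ys)" by simp
  then have "(v, y) \<in># edges t" unfolding t_def by (simp only: eq[symmetric])
  then have "(v, y) \<in> set (zip (z # zs) zs)" using yz unfolding t_def by (simp add: edges_def)
  then obtain m where m: "m < length zs" "(z # zs) ! m = v" "zs ! m = y"
    by (auto simp: set_zip)
  define j where "j = Suc m"
  have tj: "t ! j = v" "t ! Suc j = y" "Suc j < length t" "0 < j" "t ! 0 = v" "t ! 1 = z"
    using m unfolding t_def j_def by auto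
  have nrec: "\<And>k l. j < k \<Longrightarrow> k < length t \<Longrightarrow> l \<le> j \<Longrightarrow> t ! k \<noteq> t ! l"
  proof
    fix k l assume "j < k" "k < length t" "l \<le> j" "t ! k = t ! l"
    then have "SW t" unfolding SW_def using tj yz
      by (intro exI[of _ 0] exI[of _ j] exI[of _ l] exI[of _ k]) auto
    then show False using nsw t_def by simp
  qed
  define C where "C = set (take (Suc j) t)"
  have lt: "length (take (Suc j) t) = Suc j" using tj by simp
  have inC: "\<And>e. e \<in> C \<longleftrightarrow> (\<exists>l\<le>j. l < length t \<and> t ! l = e)"
  proof -
    fix e
    have "e \<in> C \<longleftrightarrow> (\<exists>l<Suc j. take (Suc j) t ! l = e)"
      unfolding C_def in_set_conv_nth lt by simp
    also have "\<dots> \<longleftrightarrow> (\<exists>l<Suc j. t ! l = e)" by (auto simp add: nth_take)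
    also have "\<dots> \<longleftrightarrow> (\<exists>l\<le>j. l < length t \<and> t ! l = e)"
    proof
      assume "\<exists>l<Suc j. t ! l = e"
      then obtain l where "l < Suc j" "t ! l = e" by blast
      moreover have "l < length t" using \<open>l < Suc j\<close> tj(3) by simp
      moreover have "l \<le> j" using \<open>l < Suc j\<close> by simp
      ultimately show "\<exists>l\<le>j. l < length t \<and> t ! l = e" by blast
    next
      assume "\<exists>l\<le>j. l < length t \<and> t ! l = e"
      then obtain l where "l \<le> j" "t ! l = e" by blast
      then show "\<exists>l<Suc j. t ! l = e" using le_imp_less_Suc by blast
    qed
    finally show "e \<in> C \<longleftrightarrow> (\<exists>l\<le>j. l < length t \<and> t ! l = e)" .
  qed
  have noent_t: "\<forall>(a,b)\<in>set (zip t (tl t)). b \<in> C \<longrightarrow> a \<in> C"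
  proof (intro ballI, clarify)
    fix a b assume ab: "(a, b) \<in> set (zip t (tl t))" "b \<in> C"
    then obtain q where q: "Suc q < length t" "a = t ! q" "b = t ! Suc q"
    proof -
      obtain q where "q < min (length t) (length (tl t))" "a = t ! q" "b = tl t ! q"
        using ab(1) by (auto simp: set_zip)
      then show ?thesis using that[of q] by (simp add: nth_tl)
    qed
    obtain l where l: "l \<le> j" "l < length t" "t ! l = b" using ab inC by blast
    show "a \<in> C"
    proof (cases "Suc q \<le> j")
      case True
      then have "q \<le> j" "q < length t" using q by auto
      then show ?thesis using inC[of a] q by blast
    next
      case False
      then have "j < Suc q" by simp
      then show ?thesis using nrec[of "Suc q" l] q l by simp
    qed
  qed
  have "edges s = edges t" using eq unfolding s_def t_def .
  then have "set_mset (edges s) = set_mset (edges t)" by simp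
  then have zeq: "set (zip s (tl s)) = set (zip t (tl t))" by (simp add: edges_def)
  have noent_u: "\<forall>(a,b)\<in>set (zip (y # ys) ys). b \<in> C \<longrightarrow> a \<in> C"
  proof -
    have "set (zip s (tl s)) = insert (v,y) (set (zip (y#ys) ys))" by (simp add: s_def)
    then have "set (zip (y#ys) ys) \<subseteq> set (zip t (tl t))" using zeq by blast
    then show ?thesis using noent_t by blast
  qed
  have "y \<notin> C"
  proof
    assume "y \<in> C"
    then obtain l where "l \<le> j" "l < length t" "t ! l = y" using inC by blast
    then show False using nrec[of "Suc j" l] tj by simp
  qed
  then have out: "\<forall>e\<in>set (y # ys). e \<notin> C" 
  proof -
    have nu: "\<forall>(a,b)\<in>set (zip (y#ys) (tl (y#ys))). b \<in> C \<longrightarrow> a \<in> C" using noent_u by (simp only: list.sel(3))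
    show ?thesis by (rule noenter[OF nu]) (simp_all add: \<open>y \<notin> C\<close>)
  qed
  have "(v, z) \<in> set (zip t (tl t))" unfolding t_def by simp
  then have "(v, z) \<in> set (zip s (tl s))" using zeq by simp
  then have "(v, z) \<in> set (zip (y # ys) ys)" using yz unfolding s_def by simp
  then have "v \<in> set (y # ys)" by (rule set_zip_leftD)
  moreover have "v \<in> C"
  proof -
    have "0 \<le> j \<and> 0 < length t \<and> t ! 0 = v" using tj by auto
    then show ?thesis using inC[of v] by blast
  qed
  ultimately show False using out by blast
qed

lemma notSW_Leul:
  assumes "\<not> SW t"
  shows "t \<in> Leul"
proof (rule ccontr)
  assume "t \<notin> Leul"
  then obtain s where s: "s \<noteq> []" "hd s = hd t" "edges s = edges t" "s \<noteq> t" and ne: "t \<noteq> []"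
    unfolding Leul_def by auto
  have "size (edges s) = size (edges t)" using s(3) by simp
  then have l1: "length s - 1 = length t - 1" by (simp add: size_edges)
  have "length s > 0" "length t > 0" using s(1) ne by auto
  then have len: "length s = length t" using l1 by arith
  obtain X v y ys z zs where d: "s = X @ v # y # ys" "t = X @ v # z # zs" "y \<noteq> z"
    using decomp[OF len s(4) s(1) s(2)] by blast
  have e1: "edges s = edges (X @ [v]) + edges (v # y # ys)" unfolding d(1) by (rule edges_split)
  have e2: "edges t = edges (X @ [v]) + edges (v # z # zs)" unfolding d(2) by (rule edges_split)
  have "edges (X @ [v]) + edges (v # y # ys) = edges (X @ [v]) + edges (v # z # zs)"
    using e1 e2 s(3) by metis
  then have "edges (v # y # ys) = edges (v # z # zs)" by (rule add_left_imp_eq)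
  then have "SW (v # z # zs)" using d(3) by (rule core)
  then have "SW t" unfolding d(2) by (rule SW_shift)
  then show False using assms by simp
qed

lemma Leul_iff: "t \<in> Leul \<longleftrightarrow> \<not> SW t"
  using notSW_Leul SW_not_Leul by blast



lemma loop_body_Some: "loop_body n (Some (Some u), c) = (map_option Some (n (Some u)), c(u := Black))"
  by (simp add: loop_body_def)

lemma loop:
  assumes pp: "last t = pp" and ip: "Suc ip < length t" "t ! ip = pp"
    and lastp: "\<forall>j. ip < j \<longrightarrow> Suc j < length t \<longrightarrow> t ! j \<noteq> pp"
  shows "ip < q \<Longrightarrow> q < length t \<Longrightarrow> \<exists>S.
    while_option (\<lambda>(b, _). b \<noteq> Some (Some pp)) (loop_body (snd (pn t))) (Some (Some (t!q)), c)
      = Some (Some (Some pp), \<lambda>d. if d \<in> S then Black else c d) \<and>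
    (\<forall>d\<in>insert pp S. d \<noteq> pp \<longrightarrow> (\<exists>y. snd (pn t) (Some d) = Some y \<and> y \<in> insert pp S)) \<and>
    (\<forall>d\<in>insert pp S. \<exists>l. q \<le> l \<and> l < length t \<and> t!l = d) \<and> t ! q \<in> insert pp S"
proof (induction "length t - q" arbitrary: q c rule: less_induct)
  case less
  have ne: "t \<noteq> []" using ip by auto
  show ?case
  proof (cases "Suc q = length t")
    case True
    then have tq: "t ! q = pp" using pp ne by (metis diff_Suc_1 last_conv_nth)
    have "while_option (\<lambda>(b, _). b \<noteq> Some (Some pp)) (loop_body (snd (pn t))) (Some (Some (t!q)), c)
      = Some (Some (Some pp), c)" using tq by (subst while_option_unfold) simp
    then show ?thesis using tq less.prems
      by (intro exI[of _ "{}"]) auto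
  next
    case False
    then have sq: "Suc q < length t" using less.prems by simp
    define u where "u = t ! q"
    have upp: "u \<noteq> pp" using lastp less.prems sq u_def by auto
    obtain y where y: "snd (pn t) (Some u) = Some y" using nL1[of t u q] sq u_def by fastforce
    obtain i0 where i0: "Suc i0 < length t" "t ! i0 = u" "t ! Suc i0 = y"
      "\<forall>j. i0 < j \<longrightarrow> Suc j < length t \<longrightarrow> t ! j \<noteq> u" using nL2[OF y] by blast
    have "q \<le> i0" using i0 sq u_def by (metis not_le)
    obtain S0 where S0: "while_option (\<lambda>(b, _). b \<noteq> Some (Some pp)) (loop_body (snd (pn t)))
         (Some (Some (t!Suc i0)), c(u := Black))
      = Some (Some (Some pp), \<lambda>d. if d \<in> S0 then Black else (c(u := Black)) d)"
      "\<forall>d\<in>insert pp S0. d \<noteq> pp \<longrightarrow> (\<exists>y. snd (pn t) (Some d) = Some y \<and> y \<in> insert pp S0)"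
      "\<forall>d\<in>insert pp S0. \<exists>l. Suc i0 \<le> l \<and> l < length t \<and> t!l = d" "t ! Suc i0 \<in> insert pp S0"
    proof -
      have lt: "length t - Suc i0 < length t - q" using \<open>q \<le> i0\<close> i0(1) by simp
      have "ip < Suc i0" using less.prems \<open>q \<le> i0\<close> by simp
      from less.hyps[OF lt this i0(1), of "c(u := Black)"] show ?thesis using that by blast
    qed
    have w1: "while_option (\<lambda>(b, _). b \<noteq> Some (Some pp)) (loop_body (snd (pn t))) (Some (Some (t!q)), c)
      = while_option (\<lambda>(b, _). b \<noteq> Some (Some pp)) (loop_body (snd (pn t)))
         (Some (Some (t!Suc i0)), c(u := Black))"
      using upp y i0 u_def by (subst while_option_unfold) (simp add: loop_body_Some)
    have fe: "(\<lambda>d. if d \<in> S0 then Black else (c(u := Black)) d) = (\<lambda>d. if d \<in> insert u S0 then Black else c d)"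
      by auto
    have w: "while_option (\<lambda>(b, _). b \<noteq> Some (Some pp)) (loop_body (snd (pn t))) (Some (Some (t!q)), c)
      = Some (Some (Some pp), \<lambda>d. if d \<in> insert u S0 then Black else c d)" using w1 S0(1) fe by simp
    show ?thesis
    proof (intro exI[of _ "insert u S0"] conjI w)
      show "\<forall>d\<in>insert pp (insert u S0). d \<noteq> pp \<longrightarrow> (\<exists>y. snd (pn t) (Some d) = Some y \<and> y \<in> insert pp (insert u S0))"
        using S0(2,4) y i0 by auto
      show "\<forall>d\<in>insert pp (insert u S0). \<exists>l. q \<le> l \<and> l < length t \<and> t ! l = d"
      proof
        fix d assume "d \<in> insert pp (insert u S0)"
        then consider "d = u" | "d \<in> insert pp S0" by blast
        then show "\<exists>l. q \<le> l \<and> l < length t \<and> t ! l = d"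
        proof cases
          case 1 then show ?thesis using sq u_def by (intro exI[of _ q]) auto
        next
          case 2
          then obtain l where "Suc i0 \<le> l" "l < length t" "t ! l = d" using S0(3) by blast
          then show ?thesis using \<open>q \<le> i0\<close> by (intro exI[of _ l]) auto
        qed
      qed
      show "t ! q \<in> insert pp (insert u S0)" using u_def by simp
    qed
  qed
qed

lemma G2:
  assumes nsw: "\<not> SW t" and pp: "last t = pp" and Ch: "pp \<in> Ch"
   and cl: "\<forall>d\<in>Ch. d \<noteq> pp \<longrightarrow> (\<exists>y. snd (pn t) (Some d) = Some y \<and> y \<in> Ch)"
   and clp: "\<forall>x. snd (pn t) (Some pp) = Some x \<longrightarrow> x \<in> Ch"
  shows "q < length t \<Longrightarrow> t!q \<in> Ch \<Longrightarrow> q \<le> l \<Longrightarrow> l < length t \<Longrightarrow> t!l \<in> Bs t \<union> Ch"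
proof (induction "length t - q" arbitrary: q rule: less_induct)
  case less
  show ?case
  proof (cases "l = q")
    case True then show ?thesis using less.prems by simp
  next
    case False
    then have lq: "q < l" "Suc q < length t" using less.prems by auto
    show ?thesis
    proof (cases "t ! q = pp")
      case True
      obtain x where x: "snd (pn t) (Some pp) = Some x" using nL1[of t pp q] lq True by fastforce
      obtain i' where i': "Suc i' < length t" "t ! i' = pp" "t ! Suc i' = x"
        "\<forall>j. i' < j \<longrightarrow> Suc j < length t \<longrightarrow> t ! j \<noteq> pp" using nL2[OF x] by blast
      have "q \<le> i'" using i' lq True by (metis not_le)
      have "t ! Suc q = x"
      proof (cases "q = i'")
        case True then show ?thesis using i' by simp
      next
        case False
        then show ?thesis using same_exit[OF nsw, of q i'] i' lq True pp \<open>q \<le> i'\<close> by simp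
      qed
      then have "t ! Suc q \<in> Ch" using clp x by simp
      then show ?thesis using less.hyps[of "Suc q"] lq less.prems by simp
    next
      case False
      obtain y where y: "snd (pn t) (Some (t!q)) = Some y" "y \<in> Ch" using cl less.prems False by blast
      obtain i0 where i0: "Suc i0 < length t" "t ! i0 = t ! q" "t ! Suc i0 = y"
        "\<forall>j. i0 < j \<longrightarrow> Suc j < length t \<longrightarrow> t ! j \<noteq> t ! q" using nL2[OF y(1)] by blast
      have "q \<le> i0" using i0 lq by (metis not_le)
      show ?thesis
      proof (cases "t ! Suc q = y")
        case True
        then show ?thesis using less.hyps[of "Suc q"] lq less.prems y by simp
      next
        case False
        then have "q < i0" using \<open>q \<le> i0\<close> i0 by (metis le_neq_implies_less)
        show ?thesis
        proof (cases "l \<le> i0")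
          case True
          then have "t ! l \<in> Bs t" unfolding Bs_def using i0 \<open>q < i0\<close> False lq
            by (intro CollectI exI[of _ q] exI[of _ i0] exI[of _ l]) auto
          then show ?thesis by simp
        next
          case False
          then show ?thesis using less.hyps[of "Suc i0"] i0 y \<open>q \<le> i0\<close> less.prems by simp
        qed
      qed
    qed
  qed
qed



lemma delta_eq: "delta (p, n, c) a = map_option (\<lambda>c1. (Some a, n(p := Some a), if c1 a = Black then (\<lambda>_. Black) else c1))
  (if n p \<noteq> None \<and> n p \<noteq> Some a then map_option snd (while_option (\<lambda>(b, _). b \<noteq> Some p) (loop_body n) (loop_body n (Some p, c))) else Some c)"
  by (simp add: delta_def Let_def)

lemma SW_Nil: "\<not> SW []" by (simp add: SW_def)
lemma SW_single: "\<not> SW [a]" by (simp add: SW_def)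
lemma Bs_Nil: "Bs [] = {}" by (simp add: Bs_def)
lemma Bs_single: "Bs [a] = {}" by (simp add: Bs_def)

lemma col_SW: "SW t \<Longrightarrow> col t = (\<lambda>_. Black)" by (simp add: col_def)
lemma col_nSW: "\<not> SW t \<Longrightarrow> col t = (\<lambda>d. if d \<in> Bs t then Black else White)" by (simp add: col_def)

lemma step_colors:
  fixes t :: "'a list"
  defines "p \<equiv> fst (pn t)" and "n \<equiv> snd (pn t)" and "c \<equiv> col t"
  shows "\<exists>c1. (if n p \<noteq> None \<and> n p \<noteq> Some a then map_option snd (while_option (\<lambda>(b, _). b \<noteq> Some p)
      (loop_body n) (loop_body n (Some p, c))) else Some c) = Some c1 \<and>
     (if c1 a = Black then (\<lambda>_. Black) else c1) = col (t @ [a])"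
proof (cases "t = []")
  case True
  then have "n p = None" unfolding n_def p_def by (simp add: pn_Nil)
  moreover have "c = (\<lambda>_. White)" unfolding c_def using True by (simp add: col_nSW SW_Nil Bs_Nil)
  moreover have "col (t @ [a]) = (\<lambda>_. White)" using True by (simp add: col_nSW SW_single Bs_single)
  ultimately show ?thesis by (intro exI[of _ c]) simp
next
  case False
  define pp where "pp = last t"
  have p: "p = Some pp" unfolding p_def pp_def using False by (simp add: fst_pn)
  show ?thesis
  proof (cases "n p \<noteq> None \<and> n p \<noteq> Some a")
    case False
    have res: "(if c a = Black then (\<lambda>_. Black) else c) = col (t @ [a])"
    proof (cases "SW t")
      case True
      then show ?thesis using SW_mono[OF True] by (simp add: c_def col_SW)
    next
      case nsw: False
      show ?thesis
      proof (cases "a \<in> Bs t")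
        case True
        then show ?thesis using SW_snoc_intro1[OF True] nsw by (simp add: c_def col_SW col_nSW)
      next
        case aB: False
        have noX: "\<not> (\<exists>i l. Suc i < length t \<and> t!i = last t \<and> t!Suc i \<noteq> a \<and> i \<le> l \<and> l < length t \<and> t!l = d)" for d
        proof
          assume "\<exists>i l. Suc i < length t \<and> t!i = last t \<and> t!Suc i \<noteq> a \<and> i \<le> l \<and> l < length t \<and> t!l = d"
          then obtain i where i: "Suc i < length t" "t!i = pp" "t!Suc i \<noteq> a" unfolding pp_def by blast
          have "n p \<noteq> None" using nL1[of t pp i] i unfolding n_def p by auto
          then have na: "n (Some pp) = Some a" using \<open>\<not> (n p \<noteq> None \<and> n p \<noteq> Some a)\<close> p by simp
          obtain i' where i': "Suc i' < length t" "t ! i' = pp" "t ! Suc i' = a"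
            "\<forall>j. i' < j \<longrightarrow> Suc j < length t \<longrightarrow> t ! j \<noteq> pp" using nL2[OF na[unfolded n_def]] by blast
          have "i \<le> i'" using i i' by (metis not_le)
          moreover have "i \<noteq> i'" using i i' by auto
          ultimately have "t ! Suc i = t ! Suc i'" using same_exit[OF nsw, of i i'] i i' pp_def by simp
          then show False using i i' by simp
        qed
        have nsw': "\<not> SW (t @ [a])" using SW_snoc_cases[of t a] \<open>t \<noteq> []\<close> nsw aB noX by blast
        have "Bs (t @ [a]) = Bs t"
        proof
          show "Bs (t @ [a]) \<subseteq> Bs t"
          proof
            fix d assume "d \<in> Bs (t @ [a])"
            then show "d \<in> Bs t" using Bs_snoc_cases[of d t a] \<open>t \<noteq> []\<close> noX[of d] by blast
          qed
          show "Bs t \<subseteq> Bs (t @ [a])" by (intro subsetI Bs_mono)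
        qed
        then show ?thesis using nsw nsw' aB by (simp add: c_def col_nSW)
      qed
    qed
    have "(if n p \<noteq> None \<and> n p \<noteq> Some a then map_option snd (while_option (\<lambda>(b, _). b \<noteq> Some p)
      (loop_body n) (loop_body n (Some p, c))) else Some c) = Some c"
      by (rule if_not_P[OF False])
    then show ?thesis using res by blast
  next
    case True
    then obtain x where x: "n (Some pp) = Some x" "x \<noteq> a" using p by auto
    obtain ip where ip: "Suc ip < length t" "t ! ip = pp" "t ! Suc ip = x"
      "\<forall>j. ip < j \<longrightarrow> Suc j < length t \<longrightarrow> t ! j \<noteq> pp" using nL2[OF x(1)[unfolded n_def]] by blast
    have lb: "loop_body n (Some p, c) = (Some (Some x), c(pp := Black))"
      using x p by (simp add: loop_body_Some)
    obtain S where S: "while_option (\<lambda>(b, _). b \<noteq> Some (Some pp)) (loop_body n) (Some (Some (t!Suc ip)), c(pp := Black))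
      = Some (Some (Some pp), \<lambda>d. if d \<in> S then Black else (c(pp := Black)) d)"
      "\<forall>d\<in>insert pp S. d \<noteq> pp \<longrightarrow> (\<exists>y. n (Some d) = Some y \<and> y \<in> insert pp S)"
      "\<forall>d\<in>insert pp S. \<exists>l. Suc ip \<le> l \<and> l < length t \<and> t!l = d" "t ! Suc ip \<in> insert pp S"
      using loop[of t pp ip "Suc ip" "c(pp := Black)"] pp_def ip unfolding n_def by auto
    define Ch where "Ch = insert pp S"
    define c1 where "c1 = (\<lambda>d. if d \<in> Ch then Black else c d)"
    have "(\<lambda>d. if d \<in> S then Black else (c(pp := Black)) d) = c1" unfolding c1_def Ch_def by auto
    then have wl: "map_option snd (while_option (\<lambda>(b, _). b \<noteq> Some p) (loop_body n) (loop_body n (Some p, c))) = Some c1"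
      using S(1) lb p ip(3) by simp
    have ChP: "\<forall>d\<in>Ch. \<exists>l. Suc ip \<le> l \<and> l < length t \<and> t!l = d" using S(3) Ch_def by simp
    have res: "(if c1 a = Black then (\<lambda>_. Black) else c1) = col (t @ [a])"
    proof (cases "SW t")
      case True
      then have "c1 = (\<lambda>_. Black)" unfolding c1_def c_def col_def by simp
      then show ?thesis using SW_mono[OF True] by (simp add: col_SW)
    next
      case nsw: False
      have G: "\<And>q l. q < length t \<Longrightarrow> t!q \<in> Ch \<Longrightarrow> q \<le> l \<Longrightarrow> l < length t \<Longrightarrow> t!l \<in> Bs t \<union> Ch"
        using G2[OF nsw pp_def[symmetric], of Ch] S(2) x(1) ip(3) S(4) unfolding Ch_def n_def by auto
      have c1B: "c1 = (\<lambda>d. if d \<in> Bs t \<union> Ch then Black else White)"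
        unfolding c1_def c_def using nsw by (auto simp: col_nSW)
      show ?thesis
      proof (cases "a \<in> Bs t \<union> Ch")
        case True
        have "SW (t @ [a])"
        proof (cases "a \<in> Bs t")
          case True then show ?thesis by (rule SW_snoc_intro1)
        next
          case False
          then have "a \<in> Ch" using \<open>a \<in> Bs t \<union> Ch\<close> by simp
          then obtain l where l: "Suc ip \<le> l" "l < length t" "t!l = a" using ChP by blast
          show ?thesis using SW_snoc_intro2[of ip t a l] ip l x(2) pp_def by simp
        qed
        then show ?thesis using True c1B by (simp add: col_SW)
      next
        case aC: False
        have nsw': "\<not> SW (t @ [a])"
        proof
          assume "SW (t @ [a])"
          then consider "SW t" | "a \<in> Bs t" | "\<exists>i l. Suc i < length t \<and> t!i = last t \<and> t!Suc i \<noteq> a \<and> i \<le> l \<and> l < length t \<and> t!l = a"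
            using SW_snoc_cases[of t a] \<open>t \<noteq> []\<close> by blast
          then show False
          proof cases
            case 1 then show False using nsw by simp
          next
            case 2 then show False using aC by simp
          next
            case 3
            then obtain i l where il: "Suc i < length t" "t!i = pp" "i \<le> l" "l < length t" "t!l = a"
              unfolding pp_def by blast
            have "pp \<in> Ch" unfolding Ch_def by simp
            then have "t!l \<in> Bs t \<union> Ch" using G[of i l] il by simp
            then show False using il aC by simp
          qed
        qed
        have BsEq: "Bs (t @ [a]) = Bs t \<union> Ch"
        proof
          show "Bs (t @ [a]) \<subseteq> Bs t \<union> Ch"
          proof
            fix d assume "d \<in> Bs (t @ [a])"
            then consider "d \<in> Bs t" | "\<exists>i l. Suc i < length t \<and> t!i = last t \<and> t!Suc i \<noteq> a \<and> i \<le> l \<and> l < length t \<and> t!l = d"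
              using Bs_snoc_cases[of d t a] \<open>t \<noteq> []\<close> by blast
            then show "d \<in> Bs t \<union> Ch"
            proof cases
              case 1 then show ?thesis by simp
            next
              case 2
              then obtain i l where il: "Suc i < length t" "t!i = pp" "i \<le> l" "l < length t" "t!l = d"
                unfolding pp_def by blast
              have "pp \<in> Ch" unfolding Ch_def by simp
              then show ?thesis using G[of i l] il by simp
            qed
          qed
          show "Bs t \<union> Ch \<subseteq> Bs (t @ [a])"
          proof
            fix d assume "d \<in> Bs t \<union> Ch"
            then consider "d \<in> Bs t" | "d \<in> Ch" by blast
            then show "d \<in> Bs (t @ [a])"
            proof cases
              case 1 then show ?thesis by (rule Bs_mono)
            next
              case 2
              then obtain l where l: "Suc ip \<le> l" "l < length t" "t!l = d" using ChP by blast
              show ?thesis using Bs_snoc_intro[of ip t a l] ip l x(2) pp_def by simp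
            qed
          qed
        qed
        show ?thesis using nsw' BsEq aC c1B by (simp add: col_nSW)
      qed
    qed
    have "(if n p \<noteq> None \<and> n p \<noteq> Some a then map_option snd (while_option (\<lambda>(b, _). b \<noteq> Some p)
      (loop_body n) (loop_body n (Some p, c))) else Some c) = Some c1"
      by (subst if_P[OF True]) (rule wl)
    then show ?thesis using res by blast
  qed
qed

lemma step: "delta (fst (pn t), snd (pn t), col t) a = Some (fst (pn (t @ [a])), snd (pn (t @ [a])), col (t @ [a]))"
proof -
  obtain c1 where c1: "(if snd (pn t) (fst (pn t)) \<noteq> None \<and> snd (pn t) (fst (pn t)) \<noteq> Some a then map_option snd (while_option (\<lambda>(b, _). b \<noteq> Some (fst (pn t)))
      (loop_body (snd (pn t))) (loop_body (snd (pn t)) (Some (fst (pn t)), col t))) else Some (col t)) = Some c1"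
     "(if c1 a = Black then (\<lambda>_. Black) else c1) = col (t @ [a])"
    using step_colors[of t a] by blast
  show ?thesis unfolding delta_eq c1(1) using c1(2) by (simp add: pn_snoc)
qed

lemma run_snoc: "run_from q (xs @ [a]) = Option.bind (run_from q xs) (\<lambda>q'. delta q' a)"
  by (induction xs arbitrary: q) simp_all

lemma run_inv: "run_from q0 t = Some (fst (pn t), snd (pn t), col t)"
proof (induction t rule: rev_induct)
  case Nil
  show ?case by (simp add: q0_def pn_Nil col_def SW_Nil Bs_Nil)
next
  case (snoc a t)
  then show ?case by (simp add: run_snoc step)
qed

lemma col_final: "col t \<noteq> (\<lambda>_. Black) \<longleftrightarrow> \<not> SW t"
proof
  assume "col t \<noteq> (\<lambda>_. Black)" then show "\<not> SW t" by (auto simp: col_SW)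
next
  assume nsw: "\<not> SW t"
  show "col t \<noteq> (\<lambda>_. Black)"
  proof (cases "t = []")
    case True
    then have "col t = (\<lambda>_. White)" by (simp add: col_nSW SW_Nil Bs_Nil)
    then show ?thesis by (metis color.distinct(1))
  next
    case False
    then have "col t (last t) = White" using last_notin_Bs[OF nsw False] nsw by (simp add: col_nSW)
    then show ?thesis by (metis color.distinct(1))
  qed
qed

theorem mainTheorem3:
  shows "(\<forall>w :: ('a :: finite) list. run_from q0 w \<noteq> None) \<and>
         {w :: 'a list. accepts w} = Leul"
proof
  show "\<forall>w :: 'a list. run_from q0 w \<noteq> None"
  proof
    fix w :: "'a list"
    show "run_from q0 w \<noteq> None" using run_inv[of w] by simp
  qed
  show "{w :: 'a list. accepts w} = Leul"
  proof (rule set_eqI)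
    fix w :: "'a list"
    have "accepts w \<longleftrightarrow> col w \<noteq> (\<lambda>_. Black)" unfolding accepts_def final_def using run_inv[of w] by simp
    also have "\<dots> \<longleftrightarrow> \<not> SW w" by (rule col_final)
    also have "\<dots> \<longleftrightarrow> w \<in> Leul" using Leul_iff by blast
    finally show "w \<in> {w. accepts w} \<longleftrightarrow> w \<in> Leul" by simp
  qed
qed


end
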